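(* Suppose all edge probabilities $p_{ij}$ and the community size $r$ are known, and that at least one of Assumption 1.1 and Assumption 1.2 holds. Fix $\epsilon>0$ and consider the scan test that rejects (outputs $1$) if and only if $\max_{D\subseteq V,\,1\le|D|\le r}T^{\mathsf k}_D\ge1+\epsilon/2$. This test is asymptotically powerful if for all $C\subseteq V$ with $|C|=r$, \[ \max_{\emptyset\ne D\subseteq C}\frac{\mathbb{E}_0[e(D)]\,h(\rho_C-1)}{|D|\log(n/|D|)}\ge1+\epsilon . \]
   Context: Setting. For each $n$ let $V=\{1,\dots,n\}$, let $p_{ij}=p_{ji}\in[0,1]$ ($i\ne j$) be edge probabilities, let $r=r_n$ be a community size, and for each $C\subseteq V$ with $|C|=r$ let $\rho_C>1$ with $\rho_Cp_{ij}\le1$ for $i,j\in C$. All may depend on $n$, and limits are as $n\to\infty$. Observe a simple undirected graph with adjacency matrix $A$. Under $\mathbb{P}_0$ the $A_{ij}$ ($i<j$) are independent $\mathrm{Bern}(p_{ij})$. Under $\mathbb{P}_C$ they are independent with $A_{ij}\sim\mathrm{Bern}(\rho_Cp_{ij})$ for $i,j\in C$ and $\mathrm{Bern}(p_{ij})$ otherwise. $\mathbb{E}_0,\mathbb{E}_C$ are the corresponding expectations. The worst-case risk of a test $\psi_n$ is $R_n(\psi_n)=\mathbb{P}_0(\psi_n\ne0)+\max_{|C|=r}\mathbb{P}_C(\psi_n\ne1)$, and the test is asymptotically powerful if $R_n\to0$. Notation. $e(D)=\sum_{i<j,\ i,j\in D}A_{ij}$. $h(x)=(x+1)\log(x+1)-x$.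 $[x]_+=\max\{x,0\}$. $T^{\mathsf k}_D=\mathbb{E}_0[e(D)]\,h([e(D)/\mathbb{E}_0[e(D)]-1]_+)/(|D|\log(n/|D|))$, with $T^{\mathsf k}_D=0$ when $\mathbb{E}_0[e(D)]=0$. For $|D|\ge2$, $\bar p_D=\mathbb{E}_0[e(D)]/\binom{|D|}{2}$. Assumption 1.1. There exists $\delta\in(0,1/2)$ with: (i) $r=O(n^{1/2-\delta})$; (ii) there exists $0<\gamma_n=o(1)$ such that $\max_{|C|=r}\max_{D\subseteq C,\,|D|<r/(n/r)^{\gamma_n}}\frac{|D|\bar p_D}{|C|\bar p_C}\le\delta$; (iii) $\max_{|C|=r}1/\bar p_C=o(r/\log(n/r))$. Assumption 1.2. (i) $r=n^{o(1)}$; (ii) $\max_{|C|=r}\log(1/\bar p_C)=o(\log(n/r)/\log r)$. *)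

theory Defs
  imports Complex_Main "HOL-Library.Landau_Symbols"
begin

text \<open>Vertex set V = {1..n}. A graph is represented by its edge set, a subset of
  the unordered pairs written as (i,j) with 1 <= i < j <= n.\<close>

definition pairs :: "nat \<Rightarrow> (nat \<times> nat) set" where
  "pairs n = {(i,j). 1 \<le> i \<and> i < j \<and> j \<le> n}"

text \<open>Probability of the event S when the A_ij (i<j) are independent Bernoulli(q(i,j)).\<close>
definition graph_prob :: "nat \<Rightarrow> (nat \<times> nat \<Rightarrow> real) \<Rightarrow> ((nat \<times> nat) set \<Rightarrow> bool) \<Rightarrow> real" where
  "graph_prob n q S =
     (\<Sum>G\<in>Pow (pairs n). if S G then (\<Prod>e\<in>pairs n. if e \<in> G then q e else 1 - q e) else 0)"

definition null_q :: "(nat \<Rightarrow> nat \<Rightarrow> nat \<Rightarrow> real) \<Rightarrow> nat \<Rightarrow> nat \<times> nat \<Rightarrow> real" where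
  "null_q p n = (\<lambda>(i,j). p n i j)"

definition alt_q :: "(nat \<Rightarrow> nat \<Rightarrow> nat \<Rightarrow> real) \<Rightarrow> (nat \<Rightarrow> nat set \<Rightarrow> real) \<Rightarrow> nat \<Rightarrow> nat set
    \<Rightarrow> nat \<times> nat \<Rightarrow> real" where
  "alt_q p \<rho> n C = (\<lambda>(i,j). if i \<in> C \<and> j \<in> C then \<rho> n C * p n i j else p n i j)"

definition edges_in :: "(nat \<times> nat) set \<Rightarrow> nat set \<Rightarrow> nat" where
  "edges_in G D = card {(i,j). (i,j) \<in> G \<and> i \<in> D \<and> j \<in> D}"

definition mean_edges :: "(nat \<Rightarrow> nat \<Rightarrow> nat \<Rightarrow> real) \<Rightarrow> nat \<Rightarrow> nat set \<Rightarrow> real" where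
  "mean_edges p n D = (\<Sum>(i,j)\<in>{(i,j). (i,j) \<in> pairs n \<and> i \<in> D \<and> j \<in> D}. p n i j)"

definition pbar :: "(nat \<Rightarrow> nat \<Rightarrow> nat \<Rightarrow> real) \<Rightarrow> nat \<Rightarrow> nat set \<Rightarrow> real" where
  "pbar p n D = mean_edges p n D / real (card D choose 2)"

definition hfun :: "real \<Rightarrow> real" where
  "hfun x = (x + 1) * ln (x + 1) - x"

definition Tk :: "(nat \<Rightarrow> nat \<Rightarrow> nat \<Rightarrow> real) \<Rightarrow> nat \<Rightarrow> nat set \<Rightarrow> (nat \<times> nat) set \<Rightarrow> real" where
  "Tk p n D G = (let \<mu> = mean_edges p n D in
     if \<mu> = 0 then 0
     else \<mu> * hfun (max (real (edges_in G D) / \<mu> - 1) 0) / (real (card D) * ln (real n / real (card D))))"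

definition scan_test :: "(nat \<Rightarrow> nat \<Rightarrow> nat \<Rightarrow> real) \<Rightarrow> (nat \<Rightarrow> nat) \<Rightarrow> real \<Rightarrow> nat
    \<Rightarrow> (nat \<times> nat) set \<Rightarrow> bool" where
  "scan_test p r \<epsilon> n G =
     (\<exists>D. D \<subseteq> {1..n} \<and> 1 \<le> card D \<and> card D \<le> r n \<and> Tk p n D G \<ge> 1 + \<epsilon> / 2)"

definition risk :: "(nat \<Rightarrow> nat \<Rightarrow> nat \<Rightarrow> real) \<Rightarrow> (nat \<Rightarrow> nat set \<Rightarrow> real) \<Rightarrow> (nat \<Rightarrow> nat)
    \<Rightarrow> (nat \<Rightarrow> (nat \<times> nat) set \<Rightarrow> bool) \<Rightarrow> nat \<Rightarrow> real" where
  "risk p \<rho> r \<psi> n =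
     graph_prob n (null_q p n) (\<lambda>G. \<psi> n G) +
     Max {graph_prob n (alt_q p \<rho> n C) (\<lambda>G. \<not> \<psi> n G) | C. C \<subseteq> {1..n} \<and> card C = r n}"

definition asymp_powerful :: "(nat \<Rightarrow> nat \<Rightarrow> nat \<Rightarrow> real) \<Rightarrow> (nat \<Rightarrow> nat set \<Rightarrow> real) \<Rightarrow> (nat \<Rightarrow> nat)
    \<Rightarrow> (nat \<Rightarrow> (nat \<times> nat) set \<Rightarrow> bool) \<Rightarrow> bool" where
  "asymp_powerful p \<rho> r \<psi> \<longleftrightarrow> (risk p \<rho> r \<psi> \<longlonglongrightarrow> 0)"

definition assumption_1_1 :: "(nat \<Rightarrow> nat \<Rightarrow> nat \<Rightarrow> real) \<Rightarrow> (nat \<Rightarrow> nat) \<Rightarrow> bool" where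
  "assumption_1_1 p r \<longleftrightarrow> (\<exists>\<delta>::real. 0 < \<delta> \<and> \<delta> < 1/2 \<and>
     (\<lambda>n. real (r n)) \<in> O(\<lambda>n. real n powr (1/2 - \<delta>)) \<and>
     (\<exists>\<gamma>::nat \<Rightarrow> real. (\<forall>n. 0 < \<gamma> n) \<and> \<gamma> \<longlonglongrightarrow> 0 \<and>
        (\<forall>n C D. C \<subseteq> {1..n} \<and> card C = r n \<and> D \<subseteq> C \<and>
            real (card D) < real (r n) / (real n / real (r n)) powr \<gamma> n \<longrightarrow>
            real (card D) * pbar p n D / (real (card C) * pbar p n C) \<le> \<delta>)) \<and>
     (\<forall>c>0. \<forall>\<^sub>F n in sequentially. \<forall>C. C \<subseteq> {1..n} \<and> card C = r n \<longrightarrow>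
        0 < pbar p n C \<and> ln (real n / real (r n)) \<le> c * real (r n) * pbar p n C))"

definition assumption_1_2 :: "(nat \<Rightarrow> nat \<Rightarrow> nat \<Rightarrow> real) \<Rightarrow> (nat \<Rightarrow> nat) \<Rightarrow> bool" where
  "assumption_1_2 p r \<longleftrightarrow>
     (\<lambda>n. ln (real (r n)) / ln (real n)) \<longlonglongrightarrow> 0 \<and>
     (\<forall>c>0. \<forall>\<^sub>F n in sequentially. \<forall>C. C \<subseteq> {1..n} \<and> card C = r n \<longrightarrow>
        0 < pbar p n C \<and>
        ln (1 / pbar p n C) * ln (real (r n)) \<le> c * ln (real n / real (r n)))"

end

theory Submission
  imports Defs
begin


lemma h_conv:
  fixes a b :: real assumes a: "0 \<le> a" and b: "0 \<le> b"
  shows "hfun b \<ge> hfun a + (b - a) * ln (1 + a)"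
proof -
  have "ln ((1+a)/(1+b)) \<le> (1+a)/(1+b) - 1" using a b by (intro ln_le_minus_one) auto
  moreover have "ln ((1+a)/(1+b)) = ln (1+a) - ln (1+b)" using a b by (simp add: ln_div)
  ultimately have "ln (1+a) - ln(1+b) \<le> (a - b)/(1+b)" using b by (simp add: field_simps)
  hence "(1+b)*(ln (1+a) - ln(1+b)) \<le> a - b" using b by (simp add: field_simps)
  thus ?thesis unfolding hfun_def by (simp add: algebra_simps)
qed

lemma h_zero[simp]: "hfun 0 = 0" by (simp add: hfun_def)

lemma h_nonneg: "0 \<le> x \<Longrightarrow> 0 \<le> hfun (x::real)"
  using h_conv[of 0 x] by simp

lemma h_mono: "0 \<le> a \<Longrightarrow> a \<le> b \<Longrightarrow> hfun a \<le> hfun (b::real)"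
  using h_conv[of a b] by (smt (verit) ln_ge_zero mult_nonneg_nonneg)

lemma h_strict: assumes "0 \<le> a" "a < (b::real)" shows "hfun a < hfun b"
proof -
  define c where "c = (a+b)/2"
  have "hfun b \<ge> hfun c + (b - c) * ln (1 + c)" using assms by (intro h_conv) (auto simp: c_def)
  moreover have "ln (1+c) > 0" using assms by (intro ln_gt_zero) (auto simp: c_def)
  moreover have "b - c > 0" using assms by (auto simp: c_def)
  moreover have "hfun a \<le> hfun c" using assms by (intro h_mono) (auto simp: c_def)
  ultimately show ?thesis by (smt (verit) mult_pos_pos)
qed

lemma h_cont: "0 \<le> x \<Longrightarrow> isCont hfun (x::real)"
  unfolding hfun_def by (intro continuous_intros) auto

lemma h_e: "hfun (exp 1 - 1) = 1" by (simp add: hfun_def)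

lemma h_big: assumes "0 \<le> s" shows "s \<le> hfun (s + exp 1)"
proof -
  have "hfun (s + exp 1) \<ge> hfun (exp 1 - 1) + (s + exp 1 - (exp 1 - 1)) * ln (1 + (exp 1 - 1))"
    using assms by (intro h_conv) (auto simp: add_increasing)
  thus ?thesis using assms by (simp add: h_e)
qed

lemma h_ivt: assumes "0 \<le> s" "s \<le> hfun B" "0 \<le> B"
  shows "\<exists>x. 0 \<le> x \<and> x \<le> B \<and> hfun x = s"
  using IVT[of hfun 0 s B] assms h_cont by auto

lemma h_ivt': assumes "0 \<le> s" shows "\<exists>x\<ge>0. hfun x = s"
  using h_ivt[of s "s + exp 1"] h_big[of s] assms by (auto simp: add_nonneg_nonneg)

lemma exp_neg_quad: assumes "0 \<le> (b::real)" shows "exp (-b) \<le> 1 - b + b^2/2"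
proof -
  let ?f = "\<lambda>x::real. 1 - x + x^2/2 - exp (-x)"
  have "?f 0 \<le> ?f b"
  proof (rule DERIV_nonneg_imp_nondecreasing[OF assms])
    fix x :: real assume "0 \<le> x" "x \<le> b"
    have "DERIV ?f x :> (-1 + x + exp (-x))"
      by (auto intro!: derivative_eq_intros simp: power2_eq_square)
    moreover have "-1 + x + exp (-x) \<ge> 0" using exp_ge_add_one_self[of "-x"] by simp
    ultimately show "\<exists>y. DERIV ?f x :> y \<and> y \<ge> 0" by blast
  qed
  thus ?thesis by simp
qed

lemma phi_aux: assumes "0 \<le> l" shows "exp l * (l^2 - 2) + 2 + 2*l \<ge> (0::real)"
proof -
  let ?g = "\<lambda>x::real. exp x * (x^2 + 2*x - 2) + 2"
  let ?f = "\<lambda>x::real. exp x * (x^2 - 2) + 2 + 2*x"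
  have g: "?g x \<ge> 0" if "0 \<le> x" for x
  proof -
    have "?g 0 \<le> ?g x"
    proof (rule DERIV_nonneg_imp_nondecreasing[OF that])
      fix y :: real assume "0 \<le> y" "y \<le> x"
      have "DERIV ?g y :> exp y * (y^2 + 4*y)"
        by (auto intro!: derivative_eq_intros simp: power2_eq_square algebra_simps)
      moreover have "exp y * (y^2 + 4*y) \<ge> 0" using \<open>0 \<le> y\<close> by simp
      ultimately show "\<exists>z. DERIV ?g y :> z \<and> z \<ge> 0" by blast
    qed
    thus ?thesis by simp
  qed
  have "?f 0 \<le> ?f l"
  proof (rule DERIV_nonneg_imp_nondecreasing[OF assms])
    fix y :: real assume "0 \<le> y" "y \<le> l"
    have "DERIV ?f y :> ?g y"
      by (auto intro!: derivative_eq_intros simp: power2_eq_square algebra_simps)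
    thus "\<exists>z. DERIV ?f y :> z \<and> z \<ge> 0" using g[OF \<open>0 \<le> y\<close>] by blast
  qed
  thus ?thesis by simp
qed

lemma phi_bound: assumes "0 \<le> (y::real)"
  shows "(1+y) * (ln (1+y))^2 \<le> 2 * (1 + ln (1+y)) * hfun y"
proof -
  define l where "l = ln (1+y)"
  have l0: "0 \<le> l" using assms by (simp add: l_def)
  have e: "exp l = 1 + y" using assms by (simp add: l_def)
  have A1: "exp l * (l^2 - 2) + 2 + 2*l \<ge> 0" using phi_aux[OF l0] .
  have hy: "hfun y = exp l * l - exp l + 1" unfolding hfun_def using e by (simp add: l_def algebra_simps)
  have A2: "2 * (1 + l) * hfun y - (1+y) * l^2 = exp l * (l^2 - 2) + 2 + 2*l"
    unfolding hy e[symmetric] by (simp add: algebra_simps power2_eq_square)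
  from A1 A2 have "(1+y) * l^2 \<le> 2 * (1 + l) * hfun y" by linarith
  thus ?thesis by (simp add: l_def)
qed



definition wt :: "nat \<Rightarrow> (nat \<times> nat \<Rightarrow> real) \<Rightarrow> (nat \<times> nat) set \<Rightarrow> real" where
  "wt n q G = (\<Prod>e\<in>pairs n. if e \<in> G then q e else 1 - q e)"

lemma finite_pairs[simp]: "finite (pairs n)"
proof -
  have "pairs n \<subseteq> {1..n} \<times> {1..n}" by (auto simp: pairs_def)
  thus ?thesis by (rule finite_subset) auto
qed

lemma graph_prob_wt: "graph_prob n q S = (\<Sum>G\<in>Pow (pairs n). if S G then wt n q G else 0)"
  unfolding graph_prob_def wt_def by (rule refl)

lemma sum_pow_prod:
  fixes a b :: "'a \<Rightarrow> real"
  assumes "finite P"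
  shows "(\<Sum>G\<in>Pow P. \<Prod>e\<in>P. if e \<in> G then a e else b e) = (\<Prod>e\<in>P. a e + b e)"
proof -
  have "(\<Prod>e\<in>P. a e + b e) = (\<Sum>X\<in>Pow P. (\<Prod>x\<in>X. a x) * (\<Prod>x\<in>P-X. b x))"
    using prod_add[OF assms] .
  also have "\<dots> = (\<Sum>G\<in>Pow P. \<Prod>e\<in>P. if e \<in> G then a e else b e)"
  proof (rule sum.cong[OF refl])
    fix X assume "X \<in> Pow P"
    hence "P \<inter> {x. x \<in> X} = X" "P \<inter> - {x. x \<in> X} = P - X" by auto
    thus "(\<Prod>x\<in>X. a x) * (\<Prod>x\<in>P-X. b x) = (\<Prod>e\<in>P. if e \<in> X then a e else b e)"
      using prod.If_cases[OF assms, of "\<lambda>x. x \<in> X" a b] by simp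
  qed
  finally show ?thesis by simp
qed

definition qok :: "nat \<Rightarrow> (nat \<times> nat \<Rightarrow> real) \<Rightarrow> bool" where
  "qok n q \<longleftrightarrow> (\<forall>e\<in>pairs n. 0 \<le> q e \<and> q e \<le> 1)"

lemma wt_nonneg: "qok n q \<Longrightarrow> 0 \<le> wt n q G"
  unfolding wt_def qok_def by (intro prod_nonneg) auto

lemma mgf_bound:
  assumes q: "qok n q" and T: "T \<subseteq> pairs n"
  shows "(\<Sum>G\<in>Pow (pairs n). wt n q G * exp (\<beta> * real (card (G \<inter> T))))
           \<le> exp ((\<Sum>e\<in>T. q e) * (exp \<beta> - 1))"
proof -
  define P where "P = pairs n"
  define z where "z e = (if e \<in> T then exp \<beta> else 1)" for e
  have fin: "finite P" by (simp add: P_def)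
  have eq1: "wt n q G * exp (\<beta> * real (card (G \<inter> T))) =
      (\<Prod>e\<in>P. if e \<in> G then q e * z e else 1 - q e)" if G: "G \<subseteq> P" for G
  proof -
    have "(\<Prod>e\<in>P. if e \<in> G then z e else 1) = (\<Prod>e\<in>P \<inter> {e. e \<in> G}. z e) * (\<Prod>e\<in>P \<inter> - {e. e \<in> G}. 1)"
      using prod.If_cases[OF fin, of "\<lambda>e. e \<in> G" z "\<lambda>_. 1"] by simp
    also have "P \<inter> {e. e \<in> G} = G" using G by auto
    also have "(\<Prod>e\<in>P \<inter> - {e. e \<in> G}. (1::real)) = 1" by simp
    also have "(\<Prod>e\<in>G. z e) * 1 = (\<Prod>e\<in>G \<inter> {e. e \<in> T}. exp \<beta>) * (\<Prod>e\<in>G \<inter> - {e. e \<in> T}. 1)"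
      unfolding z_def using prod.If_cases[OF finite_subset[OF G fin], of "\<lambda>e. e \<in> T" "\<lambda>_. exp \<beta>" "\<lambda>_. 1"] by simp
    also have "\<dots> = exp \<beta> ^ card (G \<inter> T)" by (simp add: Int_def)
    also have "\<dots> = exp (\<beta> * real (card (G \<inter> T)))" by (simp add: exp_of_nat2_mult)
    finally have "exp (\<beta> * real (card (G \<inter> T))) = (\<Prod>e\<in>P. if e \<in> G then z e else 1)" by simp
    thus ?thesis unfolding wt_def P_def[symmetric] by (simp add: prod.distrib[symmetric] if_distrib if_distribR cong: if_cong)
  qed
  have "(\<Sum>G\<in>Pow P. wt n q G * exp (\<beta> * real (card (G \<inter> T)))) =
        (\<Sum>G\<in>Pow P. \<Prod>e\<in>P. if e \<in> G then q e * z e else 1 - q e)"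
    by (rule sum.cong) (auto simp: eq1)
  also have "\<dots> = (\<Prod>e\<in>P. q e * z e + (1 - q e))" by (rule sum_pow_prod[OF fin])
  also have "\<dots> \<le> (\<Prod>e\<in>P. exp (q e * (z e - 1)))"
  proof (rule prod_mono)
    fix e assume "e \<in> P"
    hence "0 \<le> q e" "q e \<le> 1" using q by (auto simp: qok_def P_def)
    moreover have "0 < z e" by (simp add: z_def)
    ultimately have "0 \<le> q e * z e" by simp
    thus "0 \<le> q e * z e + (1 - q e) \<and> q e * z e + (1 - q e) \<le> exp (q e * (z e - 1))"
      using exp_ge_add_one_self[of "q e * (z e - 1)"] \<open>q e \<le> 1\<close> by (simp add: algebra_simps)
  qed
  also have "\<dots> = exp (\<Sum>e\<in>P. q e * (z e - 1))" by (simp add: exp_sum[OF fin])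
  also have "(\<Sum>e\<in>P. q e * (z e - 1)) = (\<Sum>e\<in>T. q e * (exp \<beta> - 1))"
  proof -
    have "(\<Sum>e\<in>P. q e * (z e - 1)) = (\<Sum>e\<in>P. if e \<in> T then q e * (exp \<beta> - 1) else 0)"
      by (rule sum.cong) (auto simp: z_def)
    also have "\<dots> = (\<Sum>e\<in>P \<inter> T. q e * (exp \<beta> - 1))" using fin by (simp add: sum.inter_restrict)
    also have "P \<inter> T = T" using T by (auto simp: P_def)
    finally show ?thesis by simp
  qed
  finally show ?thesis by (simp add: P_def sum_distrib_right)
qed

lemma markov:
  assumes q: "qok n q" and f: "\<And>G. G \<subseteq> pairs n \<Longrightarrow> S G \<Longrightarrow> 1 \<le> f G"
    and f0: "\<And>G. G \<subseteq> pairs n \<Longrightarrow> 0 \<le> f G"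
  shows "graph_prob n q S \<le> (\<Sum>G\<in>Pow (pairs n). wt n q G * f G)"
  unfolding graph_prob_wt
proof (rule sum_mono)
  fix G assume "G \<in> Pow (pairs n)"
  thus "(if S G then wt n q G else 0) \<le> wt n q G * f G"
    using f[of G] f0[of G] wt_nonneg[OF q, of G]
    by (auto simp: mult_le_cancel_left1 intro: mult_left_mono[where c = "wt n q G" and a = 1, simplified])
qed

lemma upper_tail:
  assumes q: "qok n q" and T: "T \<subseteq> pairs n" and b: "0 \<le> \<beta>"
  shows "graph_prob n q (\<lambda>G. A \<le> real (card (G \<inter> T)))
     \<le> exp (- \<beta> * A + (\<Sum>e\<in>T. q e) * (exp \<beta> - 1))"
proof -
  have "graph_prob n q (\<lambda>G. A \<le> real (card (G \<inter> T))) \<le>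
     (\<Sum>G\<in>Pow (pairs n). wt n q G * (exp (- \<beta> * A) * exp (\<beta> * real (card (G \<inter> T)))))"
    by (rule markov[OF q]) (auto simp: exp_add[symmetric] b mult_right_mono mult.commute[of \<beta>])
  also have "\<dots> = exp (- \<beta> * A) * (\<Sum>G\<in>Pow (pairs n). wt n q G * exp (\<beta> * real (card (G \<inter> T))))"
    by (simp add: sum_distrib_left algebra_simps)
  also have "\<dots> \<le> exp (- \<beta> * A) * exp ((\<Sum>e\<in>T. q e) * (exp \<beta> - 1))"
    by (intro mult_left_mono mgf_bound q T) auto
  finally show ?thesis by (simp add: exp_add[symmetric])
qed

lemma lower_tail:
  assumes q: "qok n q" and T: "T \<subseteq> pairs n" and b: "0 \<le> \<beta>"
  shows "graph_prob n q (\<lambda>G. real (card (G \<inter> T)) \<le> A)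
     \<le> exp (\<beta> * A + (\<Sum>e\<in>T. q e) * (exp (-\<beta>) - 1))"
proof -
  have "graph_prob n q (\<lambda>G. real (card (G \<inter> T)) \<le> A) \<le>
     (\<Sum>G\<in>Pow (pairs n). wt n q G * (exp (\<beta> * A) * exp ((-\<beta>) * real (card (G \<inter> T)))))"
    by (rule markov[OF q]) (auto simp: exp_add[symmetric] b mult_right_mono mult.commute[of \<beta>])
  also have "\<dots> = exp (\<beta> * A) * (\<Sum>G\<in>Pow (pairs n). wt n q G * exp ((-\<beta>) * real (card (G \<inter> T))))"
    by (simp add: sum_distrib_left algebra_simps)
  also have "\<dots> \<le> exp (\<beta> * A) * exp ((\<Sum>e\<in>T. q e) * (exp (-\<beta>) - 1))"
    by (intro mult_left_mono mgf_bound q T) auto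
  finally show ?thesis by (simp add: exp_add[symmetric])
qed

lemma graph_prob_mono:
  assumes q: "qok n q" and "\<And>G. G \<subseteq> pairs n \<Longrightarrow> S G \<Longrightarrow> S' G"
  shows "graph_prob n q S \<le> graph_prob n q S'"
  unfolding graph_prob_wt using assms wt_nonneg[OF q] by (intro sum_mono) auto

lemma union_bound:
  assumes q: "qok n q" and F: "finite F"
  shows "graph_prob n q (\<lambda>G. \<exists>D\<in>F. S D G) \<le> (\<Sum>D\<in>F. graph_prob n q (S D))"
proof -
  have "graph_prob n q (\<lambda>G. \<exists>D\<in>F. S D G) \<le> (\<Sum>G\<in>Pow (pairs n). \<Sum>D\<in>F. if S D G then wt n q G else 0)"
    unfolding graph_prob_wt
  proof (rule sum_mono)
    fix G assume "G \<in> Pow (pairs n)"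
    show "(if \<exists>D\<in>F. S D G then wt n q G else 0) \<le> (\<Sum>D\<in>F. if S D G then wt n q G else 0)"
    proof (cases "\<exists>D\<in>F. S D G")
      case True
      then obtain D where D: "D \<in> F" "S D G" by blast
      have "wt n q G = (if S D G then wt n q G else 0)" using D by simp
      also have "\<dots> \<le> (\<Sum>D\<in>F. if S D G then wt n q G else 0)"
        by (rule member_le_sum[OF D(1)]) (auto simp: wt_nonneg[OF q] F)
      finally show ?thesis using True by simp
    next
      case False thus ?thesis by (auto intro!: sum_nonneg simp: wt_nonneg[OF q])
    qed
  qed
  also have "\<dots> = (\<Sum>D\<in>F. graph_prob n q (S D))"
    unfolding graph_prob_wt by (rule sum.swap)
  finally show ?thesis .
qed



definition Tset :: "nat \<Rightarrow> nat set \<Rightarrow> (nat \<times> nat) set" where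
  "Tset n D = {(i,j). (i,j) \<in> pairs n \<and> i \<in> D \<and> j \<in> D}"

lemma Tset_sub: "Tset n D \<subseteq> pairs n" by (auto simp: Tset_def)

lemma finite_Tset[simp]: "finite (Tset n D)" by (rule finite_subset[OF Tset_sub]) simp

lemma edges_in_Tset: "G \<subseteq> pairs n \<Longrightarrow> edges_in G D = card (G \<inter> Tset n D)"
  unfolding edges_in_def Tset_def by (rule arg_cong[where f=card]) auto

lemma mean_edges_Tset: "mean_edges p n D = sum (null_q p n) (Tset n D)"
  unfolding mean_edges_def Tset_def null_q_def by (rule refl)

lemma alt_sum: assumes "D \<subseteq> C"
  shows "sum (alt_q p \<rho> n C) (Tset n D) = \<rho> n C * mean_edges p n D"
  unfolding mean_edges_Tset sum_distrib_left
  by (rule sum.cong) (use assms in \<open>auto simp: alt_q_def null_q_def Tset_def\<close>)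

lemma Tset_mono: "D \<subseteq> D' \<Longrightarrow> Tset n D \<subseteq> Tset n D'" by (auto simp: Tset_def)

lemma card_Tset: assumes "finite D" shows "card (Tset n D) \<le> card D choose 2"
proof -
  let ?f = "\<lambda>(i::nat,j::nat). {i,j}"
  have inj: "inj_on ?f (Tset n D)"
    by (auto simp: inj_on_def Tset_def pairs_def doubleton_eq_iff)
  have "?f ` Tset n D \<subseteq> {B. B \<subseteq> D \<and> card B = 2}"
    by (auto simp: Tset_def pairs_def)
  hence "card (Tset n D) \<le> card {B. B \<subseteq> D \<and> card B = 2}"
    using card_inj_on_le[OF inj] assms by auto
  also have "\<dots> = card D choose 2" using n_subsets[OF assms] by simp
  finally show ?thesis .
qed

lemma Tset_small: assumes "finite D" "card D \<le> 1" shows "Tset n D = {}"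
proof (rule ccontr)
  assume "Tset n D \<noteq> {}"
  then obtain i j where "i \<in> D" "j \<in> D" "i < j" by (auto simp: Tset_def pairs_def)
  hence "{i,j} \<subseteq> D" "card {i,j} = 2" by auto
  hence "2 \<le> card D" using card_mono[OF assms(1)] by metis
  thus False using assms by simp
qed

lemma qok_null:
  assumes "\<And>n i j. i \<noteq> j \<Longrightarrow> 0 \<le> p n i j \<and> p n i j \<le> 1"
  shows "qok n (null_q p n)"
  using assms by (auto simp: qok_def null_q_def pairs_def)

lemma qok_alt:
  assumes "\<And>n i j. i \<noteq> j \<Longrightarrow> 0 \<le> p n i j \<and> p n i j \<le> 1"
    and "\<rho> n C > 1"
    and "\<And>i j. i \<in> C \<Longrightarrow> j \<in> C \<Longrightarrow> i \<noteq> j \<Longrightarrow> \<rho> n C * p n i j \<le> 1"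
  shows "qok n (alt_q p \<rho> n C)"
  unfolding qok_def alt_q_def pairs_def
proof (clarify)
  fix i j assume ij: "1 \<le> i" "i < j" "j \<le> n"
  hence "i \<noteq> j" by simp
  thus "0 \<le> (if i \<in> C \<and> j \<in> C then \<rho> n C * p n i j else p n i j) \<and>
        (if i \<in> C \<and> j \<in> C then \<rho> n C * p n i j else p n i j) \<le> 1"
    using assms(1)[of i j n] assms(2) assms(3)[of i j] by auto
qed

lemma pow_le_exp_fact: "real k ^ k \<le> exp (real k) * fact k"
proof (induction k)
  case 0 thus ?case by simp
next
  case (Suc k)
  show ?case
  proof (cases "k = 0")
    case True thus ?thesis using exp_ge_add_one_self[of 1] by simp
  next
    case False
    hence k: "real k > 0" by simp
    have "(1 + 1 / real k) ^ k \<le> exp 1"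
      using exp_ge_one_plus_x_over_n_power_n[where x=1 and n=k] False by simp
    have "real k * (1 + 1/real k) = real k + 1" using k by (simp add: field_simps)
    hence "real (Suc k) ^ Suc k = (real k + 1) * (real k * (1 + 1/real k)) ^ k"
      by (simp add: add.commute)
    also have "\<dots> = (real k + 1) * (real k ^ k * (1 + 1/real k) ^ k)"
      by (simp add: power_mult_distrib)
    also have "\<dots> \<le> (real k + 1) * ((exp (real k) * fact k) * exp 1)"
      using Suc.IH \<open>(1 + 1 / real k) ^ k \<le> exp 1\<close>
      by (intro mult_left_mono mult_mono) auto
    also have "\<dots> = exp (real (Suc k)) * fact (Suc k)"
      by (simp add: exp_add algebra_simps)
    finally show ?thesis .
  qed
qed

lemma binom_bound:
  assumes "1 \<le> k" "k \<le> n"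
  shows "real (n choose k) \<le> exp (real k + real k * ln (real n / real k))"
proof -
  have "fact k * fact (n - k) * (n choose k) = fact n" using binomial_fact_lemma[OF assms(2)] .
  hence "(n choose k) * fact k = fact n div fact (n - k)"
    by (metis fact_nonzero mult.commute nonzero_mult_div_cancel_left mult.assoc)
  also have "\<dots> \<le> n ^ k" by (rule fact_div_fact_le_pow[OF assms(2)])
  finally have "real (n choose k) * fact k \<le> real n ^ k"
    by (metis of_nat_fact of_nat_le_iff of_nat_mult of_nat_power)
  hence A: "real (n choose k) \<le> real n ^ k / fact k" by (simp add: field_simps)
  have k0: "real k > 0" "real n > 0" using assms by auto
  have "real n ^ k / fact k = (real n / real k) ^ k * (real k ^ k / fact k)"
    using k0 by (simp add: power_divide field_simps)
  also have "\<dots> \<le> (real n / real k) ^ k * exp (real k)"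
    using pow_le_exp_fact[of k] by (intro mult_left_mono) (auto simp: field_simps)
  also have "(real n / real k) ^ k = exp (real k * ln (real n / real k))"
  proof -
    have "exp (real k * ln (real n / real k)) = exp (ln (real n / real k)) ^ k" by (rule exp_of_nat_mult)
    thus ?thesis using k0 by simp
  qed
  finally show ?thesis using A by (simp add: exp_add mult.commute)
qed



lemma graph_prob_False: "graph_prob n q (\<lambda>G. False) = 0"
  by (simp add: graph_prob_def)

lemma null_single:
  assumes prange: "\<And>n i j. i \<noteq> j \<Longrightarrow> 0 \<le> p n i j \<and> p n i j \<le> 1"
    and D: "finite D" "1 \<le> card D" and L: "0 < ln (real n / real (card D))" and t: "0 < t"
  shows "graph_prob n (null_q p n) (\<lambda>G. t \<le> Tk p n D G)
          \<le> exp (- (t * real (card D) * ln (real n / real (card D))))"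
proof -
  define \<mu> where "\<mu> = mean_edges p n D"
  define k where "k = real (card D)"
  define L where "L = ln (real n / real (card D))"
  have q: "qok n (null_q p n)" by (rule qok_null[OF prange])
  have mu0: "0 \<le> \<mu>" unfolding \<mu>_def mean_edges_Tset
    using q Tset_sub[of n D] by (intro sum_nonneg) (auto simp: qok_def)
  have k0: "0 < k" using D by (simp add: k_def)
  have L0: "0 < L" using L by (simp add: L_def)
  show ?thesis
  proof (cases "\<mu> = 0")
    case True
    have "graph_prob n (null_q p n) (\<lambda>G. t \<le> Tk p n D G) \<le> graph_prob n (null_q p n) (\<lambda>G. False)"
      by (rule graph_prob_mono[OF q]) (use True t in \<open>auto simp: Tk_def \<mu>_def\<close>)
    moreover have "0 \<le> exp (- (t * real (card D) * ln (real n / real (card D))))" by simp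
    ultimately show ?thesis unfolding graph_prob_False by linarith
  next
    case False
    hence mu: "0 < \<mu>" using mu0 by simp
    define s where "s = t * k * L"
    have s0: "0 < s" using t k0 L0 by (simp add: s_def)
    obtain x where x: "0 \<le> x" "hfun x = s / \<mu>" using h_ivt'[of "s/\<mu>"] s0 mu by auto
    have xpos: "0 < x" using x s0 mu by (cases "x = 0") auto
    define A where "A = \<mu> * (1 + x)"
    have "graph_prob n (null_q p n) (\<lambda>G. t \<le> Tk p n D G)
          \<le> graph_prob n (null_q p n) (\<lambda>G. A \<le> real (card (G \<inter> Tset n D)))"
    proof (rule graph_prob_mono[OF q])
      fix G assume G: "G \<subseteq> pairs n" and T: "t \<le> Tk p n D G"
      define X where "X = real (card (G \<inter> Tset n D))"
      define u where "u = max (X / \<mu> - 1) 0"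
      have TT: "Tk p n D G = \<mu> * hfun u / (k * L)"
        unfolding Tk_def u_def X_def edges_in_Tset[OF G] using False
        by (simp add: \<mu>_def k_def L_def Let_def)
      have "t * (k * L) \<le> Tk p n D G * (k * L)" using T k0 L0 by (intro mult_right_mono) auto
      also have "\<dots> = \<mu> * hfun u" unfolding TT using k0 L0 by simp
      finally have "t * (k * L) \<le> \<mu> * hfun u" .
      hence su: "s \<le> \<mu> * hfun u" by (simp add: s_def mult.assoc)
      show "A \<le> real (card (G \<inter> Tset n D))"
      proof (rule ccontr)
        assume "\<not> ?thesis"
        hence "X < \<mu> * (1 + x)" by (simp add: A_def X_def)
        hence "X / \<mu> - 1 < x" using mu by (simp add: field_simps)
        hence "u < x" using xpos by (simp add: u_def)
        hence "hfun u < hfun x" by (intro h_strict) (auto simp: u_def)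
        hence "\<mu> * hfun u < \<mu> * hfun x" using mu by simp
        also have "\<dots> = s" using x mu by simp
        finally show False using su by simp
      qed
    qed
    also have "\<dots> \<le> exp (- ln (1 + x) * A + (\<Sum>e\<in>Tset n D. null_q p n e) * (exp (ln (1 + x)) - 1))"
      by (rule upper_tail[OF q Tset_sub]) (use x in simp)
    also have "(\<Sum>e\<in>Tset n D. null_q p n e) = \<mu>" by (simp add: \<mu>_def mean_edges_Tset)
    also have "exp (- ln (1 + x) * A + \<mu> * (exp (ln (1 + x)) - 1)) = exp (- (\<mu> * hfun x))"
      using x(1) by (simp add: A_def hfun_def algebra_simps)
    also have "\<mu> * hfun x = s" using x mu by simp
    finally show ?thesis by (simp add: s_def k_def L_def)
  qed
qed

lemma geom_sum: "(1 - w) * (\<Sum>k\<in>{1..m}. w ^ k) = w - (w::real) ^ (m + 1)"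
proof (induction m)
  case 0 thus ?case by simp
next
  case (Suc m)
  have "{1..Suc m} = insert (Suc m) {1..m}" by auto
  hence "(\<Sum>k\<in>{1..Suc m}. w ^ k) = w ^ Suc m + (\<Sum>k\<in>{1..m}. w ^ k)" by simp
  hence "(1 - w) * (\<Sum>k\<in>{1..Suc m}. w ^ k) = (1 - w) * w ^ Suc m + (1 - w) * (\<Sum>k\<in>{1..m}. w ^ k)"
    by (simp add: distrib_left)
  also have "\<dots> = (1 - w) * w ^ Suc m + (w - w ^ (m + 1))" by (simp only: Suc.IH)
  also have "(1 - w) * w ^ Suc m + (w - w ^ (m + 1)) = w - w ^ (Suc m + 1)" by (simp add: algebra_simps)
  finally show ?case .
qed

lemma geom_bound: assumes "0 \<le> w" "w \<le> 1/2" shows "(\<Sum>k\<in>{1..m}. w ^ k) \<le> 2 * (w::real)"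
proof -
  have "(1 - w) * (\<Sum>k\<in>{1..m}. w ^ k) \<le> w" using geom_sum[of w m] assms by simp
  moreover have "0 \<le> (\<Sum>k\<in>{1..m}. w ^ k)" using assms by (simp add: sum_nonneg)
  moreover have "(1/2) * (\<Sum>k\<in>{1..m}. w ^ k) \<le> (1 - w) * (\<Sum>k\<in>{1..m}. w ^ k)"
    using assms calculation(2) by (intro mult_right_mono) auto
  ultimately show ?thesis by linarith
qed



lemma null_total:
  assumes prange: "\<And>n i j. i \<noteq> j \<Longrightarrow> 0 \<le> p n i j \<and> p n i j \<le> 1"
    and eps: "0 < \<epsilon>" and r1: "1 \<le> r n" and rn: "r n < n"
  shows "graph_prob n (null_q p n) (scan_test p r \<epsilon> n)
     \<le> (\<Sum>k\<in>{1..r n}. exp (1 - (\<epsilon>/2) * ln (real n / real (r n))) ^ k)"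
proof -
  define t where "t = 1 + \<epsilon>/2"
  define F where "F = {D. D \<subseteq> {1..n} \<and> 1 \<le> card D \<and> card D \<le> r n}"
  define g where "g k = exp (- (t * real k * ln (real n / real k)))" for k :: nat
  have q: "qok n (null_q p n)" by (rule qok_null[OF prange])
  have tpos: "0 < t" using eps by (simp add: t_def)
  have finF: "finite F" unfolding F_def by (rule finite_subset[of _ "Pow {1..n}"]) auto
  have "graph_prob n (null_q p n) (scan_test p r \<epsilon> n)
      \<le> graph_prob n (null_q p n) (\<lambda>G. \<exists>D\<in>F. t \<le> Tk p n D G)"
    by (rule graph_prob_mono[OF q]) (auto simp: scan_test_def F_def t_def)
  also have "\<dots> \<le> (\<Sum>D\<in>F. graph_prob n (null_q p n) (\<lambda>G. t \<le> Tk p n D G))"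
    by (rule union_bound[OF q finF])
  also have "\<dots> \<le> (\<Sum>D\<in>F. g (card D))"
  proof (rule sum_mono)
    fix D assume D: "D \<in> F"
    hence fD: "finite D" "1 \<le> card D" "card D \<le> r n" by (auto simp: F_def intro: finite_subset)
    have "real n / real (card D) > 1" using fD rn by simp
    hence L: "0 < ln (real n / real (card D))" by simp
    show "graph_prob n (null_q p n) (\<lambda>G. t \<le> Tk p n D G) \<le> g (card D)"
      unfolding g_def by (rule null_single[of p D n t, OF prange fD(1) fD(2) L tpos])
  qed
  also have "\<dots> = (\<Sum>k\<in>{1..r n}. \<Sum>D\<in>{D. D \<in> F \<and> card D = k}. g (card D))"
    by (rule sum.group[symmetric, OF finF]) (auto simp: F_def)
  also have "\<dots> = (\<Sum>k\<in>{1..r n}. real (n choose k) * g k)"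
  proof (rule sum.cong[OF refl])
    fix k assume k: "k \<in> {1..r n}"
    have "{D. D \<in> F \<and> card D = k} = {D. D \<subseteq> {1..n} \<and> card D = k}" using k by (auto simp: F_def)
    hence "(\<Sum>D\<in>{D. D \<in> F \<and> card D = k}. g (card D)) = (\<Sum>D\<in>{D. D \<subseteq> {1..n} \<and> card D = k}. g k)"
      by simp
    also have "\<dots> = real (card {D. D \<subseteq> {1..n} \<and> card D = k}) * g k" by simp
    also have "card {D. D \<subseteq> {1..n} \<and> card D = k} = n choose k" using n_subsets[of "{1..n}" k] by simp
    finally show "(\<Sum>D\<in>{D. D \<in> F \<and> card D = k}. g (card D)) = real (n choose k) * g k" .
  qed
  also have "\<dots> \<le> (\<Sum>k\<in>{1..r n}. exp (1 - (\<epsilon>/2) * ln (real n / real (r n))) ^ k)"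
  proof (rule sum_mono)
    fix k assume k: "k \<in> {1..r n}"
    hence k1: "1 \<le> k" "k \<le> n" using rn by auto
    have kpos: "0 < real k" using k1 by simp
    have "ln (real n / real (r n)) \<le> ln (real n / real k)"
      using k rn kpos by (intro ln_mono) (auto simp: frac_le)
    hence Lk: "(\<epsilon>/2) * ln (real n / real (r n)) \<le> (\<epsilon>/2) * ln (real n / real k)"
      using eps by (intro mult_left_mono) auto
    have "real (n choose k) * g k \<le> exp (real k + real k * ln (real n / real k)) * g k"
      by (intro mult_right_mono binom_bound k1) (simp add: g_def)
    also have "\<dots> = exp (real k * (1 - (\<epsilon>/2) * ln (real n / real k)))"
      by (simp add: g_def t_def exp_add[symmetric] algebra_simps)
    also have "\<dots> \<le> exp (real k * (1 - (\<epsilon>/2) * ln (real n / real (r n))))"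
      using Lk kpos by simp
    also have "\<dots> = exp (1 - (\<epsilon>/2) * ln (real n / real (r n))) ^ k"
      by (rule exp_of_nat_mult)
    finally show "real (n choose k) * g k \<le> exp (1 - (\<epsilon>/2) * ln (real n / real (r n))) ^ k" .
  qed
  finally show ?thesis .
qed



lemma key_ineq:
  fixes th d hy l rho mu kL e :: real
  assumes a: "(1 - th) * hy \<le> d * l" and b: "rho * l^2 \<le> 2 * (1 + l) * hy"
    and c: "(1 + e) * kL \<le> mu * hy"
    and pos: "0 < l" "0 < rho" "0 < mu" "0 \<le> d" "th < 1" "0 \<le> hy" "0 < e" "0 \<le> kL"
  shows "(1 - th)^2 * (1 + e) / 4 * kL / (1 + l) \<le> mu * d^2 / (2 * rho)"
proof -
  have a2: "((1 - th) * hy)^2 \<le> (d * l)^2" using a pos by (intro power_mono) auto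
  have c': "(1 - th)^2 * ((1 + e) * kL) \<le> (1 - th)^2 * (mu * hy)"
    using c by (intro mult_left_mono) auto
  have "((1 - th)^2 * ((1 + e) * kL)) * (rho * l^2) \<le> ((1 - th)^2 * (mu * hy)) * (2 * (1 + l) * hy)"
    by (rule mult_mono[OF c' b]) (use pos in auto)
  hence "(1 - th)^2 * (1 + e) * kL * (rho * l^2) \<le> (1 - th)^2 * (mu * hy) * (2 * (1 + l) * hy)"
    by (simp add: mult.assoc)
  also have "\<dots> = 2 * (1 + l) * mu * ((1 - th) * hy)^2" by (simp add: power2_eq_square algebra_simps)
  also have "\<dots> \<le> 2 * (1 + l) * mu * (d * l)^2" using a2 pos by (intro mult_left_mono) auto
  finally have "((1 - th)^2 * (1 + e) * kL * rho) * l^2 \<le> (2 * (1 + l) * mu * d^2) * l^2"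
    by (simp add: power_mult_distrib algebra_simps)
  hence *: "(1 - th)^2 * (1 + e) * kL * rho \<le> 2 * (1 + l) * mu * d^2"
    using pos by (simp add: mult_le_cancel_right)
  show ?thesis using pos * by (simp add: field_simps)
qed

lemma power_single:
  assumes prange: "\<And>n i j. i \<noteq> j \<Longrightarrow> 0 \<le> p n i j \<and> p n i j \<le> 1"
    and rho1: "\<rho> n C > 1"
    and rhole: "\<And>i j. i \<in> C \<Longrightarrow> j \<in> C \<Longrightarrow> i \<noteq> j \<Longrightarrow> \<rho> n C * p n i j \<le> 1"
    and C: "C \<subseteq> {1..n}" and DC: "D \<subseteq> C" and D1: "1 \<le> card D" and Dr: "card D \<le> r n"
    and L: "0 < ln (real n / real (card D))" and eps: "0 < \<epsilon>"
    and sig: "(1 + \<epsilon>) * (real (card D) * ln (real n / real (card D))) \<le> mean_edges p n D * hfun (\<rho> n C - 1)"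
  shows "graph_prob n (alt_q p \<rho> n C) (\<lambda>G. \<not> scan_test p r \<epsilon> n G)
     \<le> exp (- ((\<epsilon> / (2 * (1 + \<epsilon>)))^2 * (1 + \<epsilon>) / 4 * (real (card D) * ln (real n / real (card D))) / (1 + ln (\<rho> n C))))"
proof -
  define \<mu> where "\<mu> = mean_edges p n D"
  define kL where "kL = real (card D) * ln (real n / real (card D))"
  define y where "y = \<rho> n C - 1"
  define l where "l = ln (\<rho> n C)"
  define th where "th = (1 + \<epsilon>/2) / (1 + \<epsilon>)"
  define T where "T = Tset n D"
  have q: "qok n (alt_q p \<rho> n C)" by (rule qok_alt[of p \<rho> n C, OF prange rho1 rhole])
  have q0: "qok n (null_q p n)" by (rule qok_null[OF prange])
  have finD: "finite D" using DC C by (meson finite_atLeastAtMost finite_subset)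
  have kL0: "0 < kL" using D1 L by (simp add: kL_def)
  have y0: "0 < y" using rho1 by (simp add: y_def)
  have l0: "0 < l" using rho1 by (simp add: l_def)
  have hy0: "0 < hfun y" using h_strict[of 0 y] y0 by simp
  have mu0: "0 \<le> \<mu>" unfolding \<mu>_def mean_edges_Tset
    using q0 Tset_sub[of n D] by (intro sum_nonneg) (auto simp: qok_def)
  have sig': "(1 + \<epsilon>) * kL \<le> \<mu> * hfun y" using sig by (simp add: \<mu>_def kL_def y_def)
  have "0 < \<mu> * hfun y" using sig' kL0 eps by (smt (verit) mult_pos_pos)
  hence mu: "0 < \<mu>" using mu0 hy0 by (cases "\<mu> = 0") auto
  have th01: "0 < th" "th < 1" using eps by (auto simp: th_def field_simps)
  obtain x where x: "0 \<le> x" "x \<le> y" "hfun x = th * hfun y"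
    using h_ivt[of "th * hfun y" y] th01 hy0 y0 by (auto simp: mult_le_cancel_right1 less_imp_le)
  define A where "A = \<mu> * (1 + x)"
  define m where "m = \<rho> n C * \<mu>"
  have msum: "sum (alt_q p \<rho> n C) T = m" unfolding T_def m_def \<mu>_def by (rule alt_sum[OF DC])
  have m0: "0 < m" using mu rho1 by (simp add: m_def)
  have Am: "A \<le> m" using mult_left_mono[of "1+x" "\<rho> n C" \<mu>] x mu by (simp add: A_def m_def y_def mult.commute)
  have "graph_prob n (alt_q p \<rho> n C) (\<lambda>G. \<not> scan_test p r \<epsilon> n G)
      \<le> graph_prob n (alt_q p \<rho> n C) (\<lambda>G. real (card (G \<inter> T)) \<le> A)"
  proof (rule graph_prob_mono[OF q])
    fix G assume G: "G \<subseteq> pairs n" and ns: "\<not> scan_test p r \<epsilon> n G"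
    show "real (card (G \<inter> T)) \<le> A"
    proof (rule ccontr)
      assume nt: "\<not> ?thesis"
      define X where "X = real (card (G \<inter> T))"
      define u where "u = max (X / \<mu> - 1) 0"
      have "X > \<mu> * (1 + x)" using nt by (simp add: X_def A_def)
      hence "X / \<mu> - 1 > x" using mu by (simp add: field_simps)
      hence "x \<le> u" by (simp add: u_def)
      hence hu: "th * hfun y \<le> hfun u" using h_mono[of x u] x by simp
      have TT: "Tk p n D G = \<mu> * hfun u / kL"
        unfolding Tk_def u_def X_def edges_in_Tset[OF G] T_def using mu
        by (simp add: \<mu>_def kL_def Let_def)
      have "1 + \<epsilon>/2 = th * (1 + \<epsilon>)" using eps by (simp add: th_def)
      also have "\<dots> * kL \<le> th * (\<mu> * hfun y)" using sig' th01 by (simp add: mult.assoc)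
      also have "\<dots> \<le> \<mu> * hfun u" using hu mu by (simp add: algebra_simps)
      finally have "(1 + \<epsilon>/2) * kL \<le> \<mu> * hfun u" .
      hence "1 + \<epsilon>/2 \<le> Tk p n D G" unfolding TT using kL0 by (simp add: field_simps)
      moreover have "D \<subseteq> {1..n}" using DC C by auto
      ultimately have "scan_test p r \<epsilon> n G" using D1 Dr by (auto simp: scan_test_def)
      thus False using ns by simp
    qed
  qed
  also have "\<dots> \<le> exp ((m - A) / m * A + sum (alt_q p \<rho> n C) T * (exp (- ((m - A) / m)) - 1))"
    by (rule lower_tail[OF q]) (use Am m0 in \<open>auto simp: T_def Tset_sub\<close>)
  also have "\<dots> \<le> exp (- ((m - A)^2 / (2 * m)))"
  proof -
    define b where "b = (m - A) / m"
    have b0: "0 \<le> b" using Am m0 by (simp add: b_def)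
    have "m * (exp (- b) - 1) \<le> m * (- b + b^2/2)"
      using exp_neg_quad[OF b0] m0 by (intro mult_left_mono) auto
    hence "b * A + m * (exp (- b) - 1) \<le> b * A + m * (- b + b^2/2)" by simp
    also have "\<dots> = - ((m - A)^2 / (2 * m))" using m0 by (simp add: b_def field_simps power2_eq_square)
    finally show ?thesis unfolding msum b_def by simp
  qed
  also have "\<dots> \<le> exp (- ((\<epsilon> / (2 * (1 + \<epsilon>)))^2 * (1 + \<epsilon>) / 4 * kL / (1 + l)))"
  proof -
    have a: "(1 - th) * hfun y \<le> (y - x) * l"
      using h_conv[of y x] x y0 by (simp add: l_def y_def algebra_simps)
    have b: "(1 + y) * (ln (1 + y))^2 \<le> 2 * (1 + ln (1 + y)) * hfun y" by (rule phi_bound) (use y0 in simp)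
    have b': "\<rho> n C * l^2 \<le> 2 * (1 + l) * hfun y" using b by (simp add: l_def y_def)
    have "(1 - th)^2 * (1 + \<epsilon>) / 4 * kL / (1 + l) \<le> \<mu> * (y - x)^2 / (2 * \<rho> n C)"
      by (rule key_ineq[OF a b' sig']) (use l0 rho1 mu x th01 hy0 eps kL0 in auto)
    also have "\<mu> * (y - x)^2 / (2 * \<rho> n C) = (m - A)^2 / (2 * m)"
      using mu rho1 by (simp add: m_def A_def y_def power2_eq_square field_simps)
    also have "1 - th = \<epsilon> / (2 * (1 + \<epsilon>))" using eps by (simp add: th_def field_simps)
    finally show ?thesis by simp
  qed
  finally show ?thesis by (simp add: kL_def l_def)
qed



lemma sig_facts:
  assumes C: "C \<subseteq> {1..n}" and cC: "card C = r n" and rn: "r n < n"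
    and DC: "D \<subseteq> C" and Dne: "D \<noteq> {}" and eps: "0 < \<epsilon>"
    and val: "1 + \<epsilon> \<le> mean_edges p n D * hfun (\<rho> n C - 1) / (real (card D) * ln (real n / real (card D)))"
  shows "1 \<le> card D" "card D \<le> r n" "0 < ln (real n / real (card D))"
    "ln (real n / real (r n)) \<le> real (card D) * ln (real n / real (card D))"
    "(1 + \<epsilon>) * (real (card D) * ln (real n / real (card D))) \<le> mean_edges p n D * hfun (\<rho> n C - 1)"
proof -
  have finC: "finite C" using C finite_subset by blast
  have finD: "finite D" using DC finC finite_subset by blast
  show k1: "1 \<le> card D" using finD Dne by (simp add: Suc_le_eq card_gt_0_iff)
  show kr: "card D \<le> r n" using card_mono[OF finC DC] cC by simp
  have kpos: "0 < real (card D)" using k1 by simp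
  have "real n / real (r n) \<le> real n / real (card D)" using kr kpos by (intro divide_left_mono) auto
  moreover have "1 < real n / real (r n)" using rn k1 kr by simp
  ultimately have lnle: "ln (real n / real (r n)) \<le> ln (real n / real (card D))" and
    "0 < ln (real n / real (r n))" by auto
  thus L: "0 < ln (real n / real (card D))" by linarith
  have "ln (real n / real (card D)) \<le> real (card D) * ln (real n / real (card D))"
    using L k1 by (simp add: mult_le_cancel_right1)
  thus "ln (real n / real (r n)) \<le> real (card D) * ln (real n / real (card D))" using lnle by linarith
  have den: "0 < real (card D) * ln (real n / real (card D))" using kpos L by simp
  show "(1 + \<epsilon>) * (real (card D) * ln (real n / real (card D))) \<le> mean_edges p n D * hfun (\<rho> n C - 1)"
    using val den by (simp add: pos_le_divide_eq)
qed

lemma rho_pbar: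
  assumes rho1: "\<rho> n C > 1"
    and rhole: "\<And>i j. i \<in> C \<Longrightarrow> j \<in> C \<Longrightarrow> i \<noteq> j \<Longrightarrow> \<rho> n C * p n i j \<le> 1"
    and C: "C \<subseteq> {1..n}" and r2: "2 \<le> card C"
  shows "\<rho> n C * pbar p n C \<le> 1"
proof -
  have finC: "finite C" using C finite_subset by blast
  have "mean_edges p n C = (\<Sum>e\<in>Tset n C. null_q p n e)" by (rule mean_edges_Tset)
  also have "\<dots> \<le> (\<Sum>e\<in>Tset n C. 1 / \<rho> n C)"
  proof (rule sum_mono)
    fix e assume "e \<in> Tset n C"
    then obtain i j where e: "e = (i,j)" "i \<in> C" "j \<in> C" "i < j" by (auto simp: Tset_def pairs_def)
    hence "\<rho> n C * p n i j \<le> 1" using rhole by simp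
    thus "null_q p n e \<le> 1 / \<rho> n C" using rho1 e by (simp add: null_q_def field_simps)
  qed
  also have "\<dots> = real (card (Tset n C)) / \<rho> n C" by simp
  also have "\<dots> \<le> real (card C choose 2) / \<rho> n C"
    using card_Tset[OF finC, of n] rho1 by (intro divide_right_mono) auto
  finally have m: "mean_edges p n C \<le> real (card C choose 2) / \<rho> n C" .
  have ch: "0 < real (card C choose 2)" using r2 by simp
  have "pbar p n C \<le> 1 / \<rho> n C" unfolding pbar_def using m ch by (simp add: divide_le_eq field_simps)
  thus ?thesis using rho1 by (simp add: field_simps)
qed

lemma ln_rho_le:
  fixes pb rho :: real
  assumes "0 < pb" "1 < rho" "rho * pb \<le> 1"
  shows "ln rho \<le> ln (1 / pb)"
proof -
  have "rho \<le> 1 / pb" using assms by (simp add: field_simps)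
  thus ?thesis using assms by (subst ln_le_cancel_iff) auto
qed

lemma ln_eventually: "\<forall>\<^sub>F n in sequentially. X \<le> ln (real n)"
proof -
  have "\<forall>\<^sub>F n in sequentially. nat \<lceil>exp X\<rceil> \<le> n" by (rule eventually_ge_at_top)
  thus ?thesis
  proof eventually_elim
    case (elim n)
    hence "exp X \<le> real n" by linarith
    moreover have "0 < exp X" by simp
    ultimately have "ln (exp X) \<le> ln (real n)" by (intro ln_mono) auto
    thus ?case by simp
  qed
qed



definition kap :: "real \<Rightarrow> real" where
  "kap \<epsilon> = (\<epsilon> / (2 * (1 + \<epsilon>)))^2 * (1 + \<epsilon>) / 4"

lemma kap_pos: "0 < \<epsilon> \<Longrightarrow> 0 < kap \<epsilon>" by (simp add: kap_def)

lemma Lr_11: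
  assumes O: "(\<lambda>n. real (r n)) \<in> O(\<lambda>n. real n powr (1/2 - \<delta>))" and d: "0 < \<delta>" "\<delta> < 1/2"
    and r1: "\<forall>\<^sub>F n in sequentially. 1 \<le> r n"
  shows "\<forall>\<^sub>F n in sequentially. M \<le> ln (real n / real (r n))"
proof -
  obtain K where K: "K > 0" "\<forall>\<^sub>F n in sequentially. norm (real (r n)) \<le> K * norm (real n powr (1/2 - \<delta>))"
    using O by (elim landau_o.bigE) auto
  have ev: "\<forall>\<^sub>F n in sequentially. (M + \<bar>ln K\<bar>) / (1/2 + \<delta>) \<le> ln (real n)" by (rule ln_eventually)
  have ev1: "\<forall>\<^sub>F n in sequentially. 1 \<le> n" by (rule eventually_ge_at_top)
  from K(2) ev ev1 r1 show ?thesis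
  proof eventually_elim
    case (elim n)
    have n0: "0 < real n" using elim by simp
    have r0: "0 < real (r n)" using elim by simp
    have rle: "real (r n) \<le> K * real n powr (1/2 - \<delta>)" using elim by simp
    have "ln (real (r n)) \<le> ln (K * real n powr (1/2 - \<delta>))" using rle r0 by (intro ln_mono) auto
    also have "\<dots> = ln K + (1/2 - \<delta>) * ln (real n)" using K n0 by (simp add: ln_mult ln_powr)
    finally have lr: "ln (real (r n)) \<le> ln K + (1/2 - \<delta>) * ln (real n)" .
    have "M + \<bar>ln K\<bar> \<le> (1/2 + \<delta>) * ln (real n)" using elim(2) d by (simp add: pos_divide_le_eq mult.commute)
    moreover have "ln (real n / real (r n)) = ln (real n) - ln (real (r n))" using n0 r0 by (simp add: ln_div)
    ultimately show ?case using lr by (simp add: algebra_simps)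
  qed
qed

lemma Lr_12:
  assumes lim: "(\<lambda>n. ln (real (r n)) / ln (real n)) \<longlonglongrightarrow> 0"
    and r1: "\<forall>\<^sub>F n in sequentially. 1 \<le> r n"
  shows "\<forall>\<^sub>F n in sequentially. M \<le> ln (real n / real (r n))"
proof -
  have e1: "\<forall>\<^sub>F n in sequentially. ln (real (r n)) / ln (real n) < 1/2"
    using order_tendstoD(2)[OF lim, of "1/2"] by simp
  have e2: "\<forall>\<^sub>F n in sequentially. max (2 * M) 1 \<le> ln (real n)" by (rule ln_eventually)
  from e1 e2 r1 show ?thesis
  proof eventually_elim
    case (elim n)
    have l0: "0 < ln (real n)" using elim(2) by linarith
    hence n0: "0 < real n" using ln_gt_zero_imp_gt_one by fastforce
    have r0: "0 < real (r n)" using elim by simp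
    have "ln (real (r n)) < ln (real n) / 2" using elim(1) l0 by (simp add: divide_less_eq)
    moreover have "ln (real n / real (r n)) = ln (real n) - ln (real (r n))" using n0 r0 by (simp add: ln_div)
    ultimately show ?case using elim(2) by linarith
  qed
qed



lemma power_C:
  assumes prange: "\<And>n i j. i \<noteq> j \<Longrightarrow> 0 \<le> p n i j \<and> p n i j \<le> 1"
    and rho_gt: "\<And>n C. C \<subseteq> {1..n} \<Longrightarrow> card C = r n \<Longrightarrow> \<rho> n C > 1"
    and rho_le: "\<And>n C i j. C \<subseteq> {1..n} \<Longrightarrow> card C = r n \<Longrightarrow> i \<in> C \<Longrightarrow> j \<in> C \<Longrightarrow> i \<noteq> j
                  \<Longrightarrow> \<rho> n C * p n i j \<le> 1"
    and eps: "0 < \<epsilon>" and C: "C \<subseteq> {1..n}" "card C = r n"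
    and DC: "D \<subseteq> C" and D1: "1 \<le> card D" and Dr: "card D \<le> r n"
    and L: "0 < ln (real n / real (card D))"
    and sig: "(1 + \<epsilon>) * (real (card D) * ln (real n / real (card D))) \<le> mean_edges p n D * hfun (\<rho> n C - 1)"
    and M: "M * (1 + ln (\<rho> n C)) \<le> real (card D) * ln (real n / real (card D))"
  shows "graph_prob n (alt_q p \<rho> n C) (\<lambda>G. \<not> scan_test p r \<epsilon> n G) \<le> exp (- (kap \<epsilon> * M))"
proof -
  have rho1: "\<rho> n C > 1" by (rule rho_gt[OF C])
  have l0: "0 < 1 + ln (\<rho> n C)" using rho1 by (smt (verit) ln_gt_zero)
  have "graph_prob n (alt_q p \<rho> n C) (\<lambda>G. \<not> scan_test p r \<epsilon> n G)
     \<le> exp (- ((\<epsilon> / (2 * (1 + \<epsilon>)))^2 * (1 + \<epsilon>) / 4 * (real (card D) * ln (real n / real (card D))) / (1 + ln (\<rho> n C))))"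
    by (rule power_single[where p=p and \<rho>=\<rho> and n=n and C=C and D=D and r=r, OF prange rho1 rho_le[OF C] C(1) DC D1 Dr L eps sig])
  also have "\<dots> \<le> exp (- (kap \<epsilon> * M))"
  proof -
    have "M \<le> real (card D) * ln (real n / real (card D)) / (1 + ln (\<rho> n C))"
      using M l0 by (simp add: pos_le_divide_eq)
    hence "kap \<epsilon> * M \<le> kap \<epsilon> * (real (card D) * ln (real n / real (card D)) / (1 + ln (\<rho> n C)))"
      using kap_pos[OF eps] by (intro mult_left_mono) auto
    thus ?thesis by (simp add: kap_def)
  qed
  finally show ?thesis .
qed

lemma power_12:
  assumes prange: "\<And>n i j. i \<noteq> j \<Longrightarrow> 0 \<le> p n i j \<and> p n i j \<le> 1"
    and rho_gt: "\<And>n C. C \<subseteq> {1..n} \<Longrightarrow> card C = r n \<Longrightarrow> \<rho> n C > 1"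
    and rho_le: "\<And>n C i j. C \<subseteq> {1..n} \<Longrightarrow> card C = r n \<Longrightarrow> i \<in> C \<Longrightarrow> j \<in> C \<Longrightarrow> i \<noteq> j
                  \<Longrightarrow> \<rho> n C * p n i j \<le> 1"
    and eps: "0 < \<epsilon>"
    and signal: "\<forall>\<^sub>F n in sequentially. \<forall>C. C \<subseteq> {1..n} \<and> card C = r n \<longrightarrow>
                   (\<exists>D. D \<subseteq> C \<and> D \<noteq> {} \<and>
                      mean_edges p n D * hfun (\<rho> n C - 1) / (real (card D) * ln (real n / real (card D)))
                        \<ge> 1 + \<epsilon>)"
    and A: "assumption_1_2 p r"
    and base: "\<forall>\<^sub>F n in sequentially. 2 \<le> r n \<and> r n < n"
    and LrM: "\<And>M. \<forall>\<^sub>F n in sequentially. M \<le> ln (real n / real (r n))"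
    and M: "0 < M"
  shows "\<forall>\<^sub>F n in sequentially. \<forall>C. C \<subseteq> {1..n} \<and> card C = r n \<longrightarrow>
           graph_prob n (alt_q p \<rho> n C) (\<lambda>G. \<not> scan_test p r \<epsilon> n G) \<le> exp (- (kap \<epsilon> * M))"
proof -
  define c where "c = ln 2 / (2 * M)"
  have c0: "0 < c" using M by (simp add: c_def)
  have ev: "\<forall>\<^sub>F n in sequentially. \<forall>C. C \<subseteq> {1..n} \<and> card C = r n \<longrightarrow>
        0 < pbar p n C \<and> ln (1 / pbar p n C) * ln (real (r n)) \<le> c * ln (real n / real (r n))"
    using A c0 unfolding assumption_1_2_def by blast
  from ev base LrM[of "2 * M"] signal show ?thesis
  proof eventually_elim
    case (elim n)
    show ?case
    proof (intro allI impI)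
      fix C assume C: "C \<subseteq> {1..n} \<and> card C = r n"
      define Lr where "Lr = ln (real n / real (r n))"
      obtain D where D: "D \<subseteq> C" "D \<noteq> {}"
        "1 + \<epsilon> \<le> mean_edges p n D * hfun (\<rho> n C - 1) / (real (card D) * ln (real n / real (card D)))"
        using elim(4) C by blast
      note sf = sig_facts[where C=C and n=n and r=r and D=D and p=p and \<rho>=\<rho>, OF conjunct1[OF C] conjunct2[OF C] conjunct2[OF elim(2)] D(1) D(2) eps D(3)]
      have rho1: "\<rho> n C > 1" using rho_gt C by blast
      have pb: "0 < pbar p n C" and pl: "ln (1 / pbar p n C) * ln (real (r n)) \<le> c * Lr"
        using elim(1) C by (auto simp: Lr_def)
      have rp: "\<rho> n C * pbar p n C \<le> 1"
        by (rule rho_pbar[where \<rho>=\<rho> and n=n and C=C and p=p, OF rho1 rho_le[of C n, OF conjunct1[OF C] conjunct2[OF C]]]) (use C elim(2) in auto)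
      have lr: "ln (\<rho> n C) \<le> ln (1 / pbar p n C)" by (rule ln_rho_le[OF pb rho1 rp])
      have ln2: "ln 2 \<le> ln (real (r n))" using elim(2) by simp
      have ln20: "0 < ln (2::real)" by simp
      have lrho0: "0 \<le> ln (\<rho> n C)" using rho1 by simp
      have "ln (1 / pbar p n C) * ln 2 \<le> ln (1 / pbar p n C) * ln (real (r n))"
        using ln2 lr lrho0 by (intro mult_left_mono) auto
      hence "ln (1 / pbar p n C) * ln 2 \<le> c * Lr" using pl by linarith
      hence "ln (\<rho> n C) * ln 2 \<le> c * Lr" using lr ln20 by (smt (verit) mult_right_mono)
      hence "ln (\<rho> n C) \<le> Lr / (2 * M)" using ln20 M by (simp add: c_def field_simps)
      hence "M * ln (\<rho> n C) \<le> Lr / 2" using M by (simp add: field_simps)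
      moreover have "2 * M \<le> Lr" using elim(3) by (simp add: Lr_def)
      ultimately have "M * (1 + ln (\<rho> n C)) \<le> real (card D) * ln (real n / real (card D))"
        using sf(4) by (simp add: Lr_def algebra_simps)
      thus "graph_prob n (alt_q p \<rho> n C) (\<lambda>G. \<not> scan_test p r \<epsilon> n G) \<le> exp (- (kap \<epsilon> * M))"
        by (intro power_C[where p=p and r=r and \<rho>=\<rho> and n=n and C=C and D=D and \<epsilon>=\<epsilon>, OF prange rho_gt rho_le eps conjunct1[OF C] conjunct2[OF C] D(1) sf(1) sf(2) sf(3) sf(5)])
    qed
  qed
qed



lemma power_11:
  assumes prange: "\<And>n i j. i \<noteq> j \<Longrightarrow> 0 \<le> p n i j \<and> p n i j \<le> 1"
    and rho_gt: "\<And>n C. C \<subseteq> {1..n} \<Longrightarrow> card C = r n \<Longrightarrow> \<rho> n C > 1"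
    and rho_le: "\<And>n C i j. C \<subseteq> {1..n} \<Longrightarrow> card C = r n \<Longrightarrow> i \<in> C \<Longrightarrow> j \<in> C \<Longrightarrow> i \<noteq> j
                  \<Longrightarrow> \<rho> n C * p n i j \<le> 1"
    and eps: "0 < \<epsilon>"
    and signal: "\<forall>\<^sub>F n in sequentially. \<forall>C. C \<subseteq> {1..n} \<and> card C = r n \<longrightarrow>
                   (\<exists>D. D \<subseteq> C \<and> D \<noteq> {} \<and>
                      mean_edges p n D * hfun (\<rho> n C - 1) / (real (card D) * ln (real n / real (card D)))
                        \<ge> 1 + \<epsilon>)"
    and A: "\<forall>c>0. \<forall>\<^sub>F n in sequentially. \<forall>C. C \<subseteq> {1..n} \<and> card C = r n \<longrightarrow>
        0 < pbar p n C \<and> ln (real n / real (r n)) \<le> c * real (r n) * pbar p n C"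
    and base: "\<forall>\<^sub>F n in sequentially. 2 \<le> r n \<and> r n < n"
    and LrM: "\<And>M. \<forall>\<^sub>F n in sequentially. M \<le> ln (real n / real (r n))"
    and M: "0 < M"
  shows "\<forall>\<^sub>F n in sequentially. \<forall>C. C \<subseteq> {1..n} \<and> card C = r n \<longrightarrow>
           graph_prob n (alt_q p \<rho> n C) (\<lambda>G. \<not> scan_test p r \<epsilon> n G) \<le> exp (- (kap \<epsilon> * M))"
proof -
  define c0 where "c0 = 1 / (4 * (1 + \<epsilon>))"
  have c0: "0 < c0" using eps by (simp add: c0_def)
  have ev1: "\<forall>\<^sub>F n in sequentially. \<forall>C. C \<subseteq> {1..n} \<and> card C = r n \<longrightarrow>
        0 < pbar p n C \<and> ln (real n / real (r n)) \<le> 1 * real (r n) * pbar p n C"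
    using A zero_less_one by blast
  have ev2: "\<forall>\<^sub>F n in sequentially. \<forall>C. C \<subseteq> {1..n} \<and> card C = r n \<longrightarrow>
        0 < pbar p n C \<and> ln (real n / real (r n)) \<le> c0 * real (r n) * pbar p n C"
    using A c0 by blast
  from ev1 ev2 base LrM[of "2 * M + 1"] signal show ?thesis
  proof eventually_elim
    case (elim n)
    show ?case
    proof (intro allI impI)
      fix C assume C: "C \<subseteq> {1..n} \<and> card C = r n"
      define Lr where "Lr = ln (real n / real (r n))"
      have Lr1: "2 * M + 1 \<le> Lr" using elim(4) by (simp add: Lr_def)
      have rho1: "\<rho> n C > 1" using rho_gt C by blast
      show "graph_prob n (alt_q p \<rho> n C) (\<lambda>G. \<not> scan_test p r \<epsilon> n G) \<le> exp (- (kap \<epsilon> * M))"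
      proof (cases "\<rho> n C \<le> exp 1")
        case True
        obtain D where D: "D \<subseteq> C" "D \<noteq> {}"
          "1 + \<epsilon> \<le> mean_edges p n D * hfun (\<rho> n C - 1) / (real (card D) * ln (real n / real (card D)))"
          using elim(5) C by blast
        note sf = sig_facts[where C=C and n=n and r=r and D=D and p=p and \<rho>=\<rho>, OF conjunct1[OF C] conjunct2[OF C] conjunct2[OF elim(3)] D(1) D(2) eps D(3)]
        have "ln (\<rho> n C) \<le> 1" using True rho1 by (metis exp_gt_zero less_trans ln_exp ln_le_cancel_iff zero_less_one)
        hence "M * (1 + ln (\<rho> n C)) \<le> M * 2" using M by (intro mult_left_mono) auto
        hence "M * (1 + ln (\<rho> n C)) \<le> 2 * M" by simp
        hence "M * (1 + ln (\<rho> n C)) \<le> real (card D) * ln (real n / real (card D))"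
          using sf(4) Lr1 by (simp add: Lr_def)
        thus ?thesis
          by (intro power_C[where p=p and r=r and \<rho>=\<rho> and n=n and C=C and D=D and \<epsilon>=\<epsilon>, OF prange rho_gt rho_le eps conjunct1[OF C] conjunct2[OF C] D(1) sf(1) sf(2) sf(3) sf(5)])
      next
        case False
        have r2: "2 \<le> r n" and rn: "r n < n" using elim(3) by auto
        have pb: "0 < pbar p n C" and pl1: "Lr \<le> real (r n) * pbar p n C"
          using elim(1) C by (auto simp: Lr_def)
        have pl0: "Lr \<le> c0 * real (r n) * pbar p n C" using elim(2) C by (auto simp: Lr_def)
        have Lr0: "1 \<le> Lr" using Lr1 M by simp
        have ch: "(real (r n) / 2)^2 \<le> real (r n choose 2)"
          using binomial_ge_n_over_k_pow_k[of 2 "r n", where 'a=real] r2 by simp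
        have mC: "mean_edges p n C = pbar p n C * real (r n choose 2)"
          using C r2 by (simp add: pbar_def)
        have "(1 + \<epsilon>) * (real (r n) * Lr) \<le> (1 + \<epsilon>) * (real (r n) * (c0 * real (r n) * pbar p n C))"
          using pl0 eps by (intro mult_left_mono) auto
        also have "\<dots> = pbar p n C * (real (r n) / 2)^2" using eps by (simp add: c0_def power2_eq_square field_simps)
        also have "\<dots> \<le> mean_edges p n C" unfolding mC using ch pb by (intro mult_left_mono) auto
        also have "\<dots> \<le> mean_edges p n C * hfun (\<rho> n C - 1)"
        proof -
          have "1 \<le> hfun (\<rho> n C - 1)" using h_mono[of "exp 1 - 1" "\<rho> n C - 1"] False h_e
            by (smt (verit) one_le_exp_iff)
          moreover have "0 \<le> mean_edges p n C" using mC pb by simp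
          ultimately show ?thesis by (simp add: mult_le_cancel_left1)
        qed
        finally have sigC: "(1 + \<epsilon>) * (real (card C) * ln (real n / real (card C))) \<le> mean_edges p n C * hfun (\<rho> n C - 1)"
          using C by (simp add: Lr_def)
        have "ln (\<rho> n C) \<le> ln (1 / pbar p n C)"
          by (rule ln_rho_le[OF pb rho1 rho_pbar[where \<rho>=\<rho> and n=n and C=C and p=p, OF rho1 rho_le[of C n, OF conjunct1[OF C] conjunct2[OF C]]]]) (use C r2 in auto)
        also have "\<dots> \<le> ln (real (r n))"
        proof -
          have "1 / pbar p n C \<le> real (r n) / Lr" using pl1 pb Lr0 by (simp add: field_simps)
          also have "\<dots> \<le> real (r n)" using Lr0 by (simp add: divide_le_eq) (simp add: mult_le_cancel_left1 Lr0)
          finally show ?thesis using pb by (intro ln_mono) auto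
        qed
        also have "\<dots> \<le> real (r n) - 1" using r2 by (intro ln_le_minus_one) auto
        finally have "1 + ln (\<rho> n C) \<le> real (r n)" by simp
        hence "M * (1 + ln (\<rho> n C)) \<le> M * real (r n)" using M by simp
        also have "\<dots> \<le> Lr * real (r n)" using Lr1 M by (intro mult_right_mono) auto
        finally have MC: "M * (1 + ln (\<rho> n C)) \<le> real (card C) * ln (real n / real (card C))"
          using C by (simp add: Lr_def mult.commute)
        have L: "0 < ln (real n / real (card C))" using Lr0 C by (simp add: Lr_def)
        show ?thesis
          by (rule power_C[where p=p and r=r and \<rho>=\<rho> and n=n and C=C and D=C and \<epsilon>=\<epsilon>, OF prange rho_gt rho_le eps conjunct1[OF C] conjunct2[OF C] subset_refl _ _ L sigC MC])
             (use C r2 in auto)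
      qed
    qed
  qed
qed



lemma graph_prob_nonneg: "qok n q \<Longrightarrow> 0 \<le> graph_prob n q S"
  unfolding graph_prob_wt by (intro sum_nonneg) (auto simp: wt_nonneg)

theorem corollary1:
  fixes p :: "nat \<Rightarrow> nat \<Rightarrow> nat \<Rightarrow> real"
    and \<rho> :: "nat \<Rightarrow> nat set \<Rightarrow> real"
    and r :: "nat \<Rightarrow> nat"
    and \<epsilon> :: real
  assumes p_sym: "\<And>n i j. i \<noteq> j \<Longrightarrow> p n i j = p n j i"
    and p_range: "\<And>n i j. i \<noteq> j \<Longrightarrow> 0 \<le> p n i j \<and> p n i j \<le> 1"
    and rho_gt: "\<And>n C. C \<subseteq> {1..n} \<Longrightarrow> card C = r n \<Longrightarrow> \<rho> n C > 1"
    and rho_le: "\<And>n C i j. C \<subseteq> {1..n} \<Longrightarrow> card C = r n \<Longrightarrow> i \<in> C \<Longrightarrow> j \<in> C \<Longrightarrow> i \<noteq> j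
                  \<Longrightarrow> \<rho> n C * p n i j \<le> 1"
    and assm: "assumption_1_1 p r \<or> assumption_1_2 p r"
    and eps: "\<epsilon> > 0"
    and signal: "\<forall>\<^sub>F n in sequentially. \<forall>C. C \<subseteq> {1..n} \<and> card C = r n \<longrightarrow>
                   (\<exists>D. D \<subseteq> C \<and> D \<noteq> {} \<and>
                      mean_edges p n D * hfun (\<rho> n C - 1) / (real (card D) * ln (real n / real (card D)))
                        \<ge> 1 + \<epsilon>)"
  shows "asymp_powerful p \<rho> r (scan_test p r \<epsilon>)"
proof -
  have pb: "\<forall>\<^sub>F n in sequentially. \<forall>C. C \<subseteq> {1..n} \<and> card C = r n \<longrightarrow> 0 < pbar p n C"
    using assm
  proof
    assume "assumption_1_1 p r"
    hence "\<forall>\<^sub>F n in sequentially. \<forall>C. C \<subseteq> {1..n} \<and> card C = r n \<longrightarrow>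
        0 < pbar p n C \<and> ln (real n / real (r n)) \<le> 1 * real (r n) * pbar p n C"
      unfolding assumption_1_1_def using zero_less_one by blast
    thus ?thesis by (rule eventually_mono) blast
  next
    assume "assumption_1_2 p r"
    hence "\<forall>\<^sub>F n in sequentially. \<forall>C. C \<subseteq> {1..n} \<and> card C = r n \<longrightarrow>
        0 < pbar p n C \<and> ln (1 / pbar p n C) * ln (real (r n)) \<le> 1 * ln (real n / real (r n))"
      unfolding assumption_1_2_def using zero_less_one by blast
    thus ?thesis by (rule eventually_mono) blast
  qed
  have r1: "\<forall>\<^sub>F n in sequentially. 1 \<le> r n"
    using pb
  proof (rule eventually_mono)
    fix n assume h: "\<forall>C. C \<subseteq> {1..n} \<and> card C = r n \<longrightarrow> 0 < pbar p n C"
    show "1 \<le> r n"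
    proof (rule ccontr)
      assume "\<not> 1 \<le> r n"
      hence "r n = 0" by simp
      hence "0 < pbar p n {}" using h by auto
      thus False by (simp add: pbar_def numeral_2_eq_2)
    qed
  qed
  have LrM: "\<forall>\<^sub>F n in sequentially. M \<le> ln (real n / real (r n))" for M
    using assm
  proof
    assume "assumption_1_1 p r"
    then obtain \<delta> where d: "0 < \<delta>" "\<delta> < 1/2" "(\<lambda>n. real (r n)) \<in> O(\<lambda>n. real n powr (1/2 - \<delta>))"
      unfolding assumption_1_1_def by blast
    show ?thesis by (rule Lr_11[OF d(3) d(1) d(2) r1])
  next
    assume "assumption_1_2 p r"
    hence "(\<lambda>n. ln (real (r n)) / ln (real n)) \<longlonglongrightarrow> 0" unfolding assumption_1_2_def by blast
    thus ?thesis by (rule Lr_12[OF _ r1])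
  qed
  have base: "\<forall>\<^sub>F n in sequentially. 2 \<le> r n \<and> r n < n"
    using LrM[of 1] r1 signal
  proof eventually_elim
    case (elim n)
    have "n \<noteq> 0" using elim(1) by (cases "n = 0") auto
    hence x0: "0 < real n / real (r n)" using elim(2) by simp
    have "0 < ln (real n / real (r n))" using elim(1) by linarith
    hence "1 < real n / real (r n)" using x0 ln_gt_zero_imp_gt_one by blast
    hence rn: "r n < n" using elim(2) by (simp add: field_simps)
    define C where "C = {1..r n}"
    have C: "C \<subseteq> {1..n}" "card C = r n" using rn by (auto simp: C_def)
    then obtain D where D: "D \<subseteq> C" "D \<noteq> {}"
      "1 + \<epsilon> \<le> mean_edges p n D * hfun (\<rho> n C - 1) / (real (card D) * ln (real n / real (card D)))"
      using elim(3) by blast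
    have "2 \<le> r n"
    proof (rule ccontr)
      assume "\<not> 2 \<le> r n"
      hence "card D \<le> 1" using card_mono[of C D] D(1) C(2) by (simp add: C_def)
      hence "Tset n D = {}" using Tset_small[of D n] D(1) finite_subset[of D C] by (simp add: C_def)
      hence "mean_edges p n D = 0" by (simp add: mean_edges_Tset)
      thus False using D(3) eps by simp
    qed
    thus ?case using rn by simp
  qed
  show ?thesis
    unfolding asymp_powerful_def
  proof (rule tendstoI)
    fix e :: real assume e: "0 < e"
    define w0 where "w0 = min (1/2) (e/4)"
    have w0: "0 < w0" "w0 \<le> 1/2" "w0 \<le> e/4" using e by (auto simp: w0_def)
    define M1 where "M1 = (2 / \<epsilon>) * (1 - ln w0)"
    define M where "M = (\<bar>ln (4 / e)\<bar> + 1) / kap \<epsilon>"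
    have kp: "0 < kap \<epsilon>" by (rule kap_pos[OF eps])
    have M0: "0 < M" using kp by (simp add: M_def)
    have kM: "kap \<epsilon> * M = \<bar>ln (4 / e)\<bar> + 1" using kp by (simp add: M_def)
    have expM: "exp (- (kap \<epsilon> * M)) < e / 4"
    proof -
      have "- (kap \<epsilon> * M) < ln (e / 4)" unfolding kM using e by (simp add: ln_div)
      hence "exp (- (kap \<epsilon> * M)) < exp (ln (e / 4))" by simp
      thus ?thesis using e by simp
    qed
    have pw: "\<forall>\<^sub>F n in sequentially. \<forall>C. C \<subseteq> {1..n} \<and> card C = r n \<longrightarrow>
           graph_prob n (alt_q p \<rho> n C) (\<lambda>G. \<not> scan_test p r \<epsilon> n G) \<le> exp (- (kap \<epsilon> * M))"
      using assm
    proof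
      assume "assumption_1_1 p r"
      hence A: "\<forall>c>0. \<forall>\<^sub>F n in sequentially. \<forall>C. C \<subseteq> {1..n} \<and> card C = r n \<longrightarrow>
        0 < pbar p n C \<and> ln (real n / real (r n)) \<le> c * real (r n) * pbar p n C"
        unfolding assumption_1_1_def by blast
      show ?thesis
        by (rule power_11[where p=p and r=r and \<rho>=\<rho>, OF p_range rho_gt rho_le eps signal A base LrM M0])
    next
      assume A: "assumption_1_2 p r"
      show ?thesis
        by (rule power_12[where p=p and r=r and \<rho>=\<rho>, OF p_range rho_gt rho_le eps signal A base LrM M0])
    qed
    from LrM[of M1] base pw
    show "\<forall>\<^sub>F n in sequentially. dist (risk p \<rho> r (scan_test p r \<epsilon>) n) 0 < e"
    proof eventually_elim
      case (elim n)
      have r1n: "1 \<le> r n" and rn: "r n < n" using elim(2) by auto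
      define w where "w = exp (1 - (\<epsilon>/2) * ln (real n / real (r n)))"
      have "w \<le> exp (1 - (\<epsilon>/2) * M1)" unfolding w_def using elim(1) eps by simp
      also have "1 - (\<epsilon>/2) * M1 = ln w0" using eps by (simp add: M1_def field_simps)
      finally have ww: "w \<le> w0" using w0 by simp
      have P0: "graph_prob n (null_q p n) (scan_test p r \<epsilon> n) \<le> e / 2"
      proof -
        have "graph_prob n (null_q p n) (scan_test p r \<epsilon> n) \<le> (\<Sum>k\<in>{1..r n}. w ^ k)"
          unfolding w_def by (rule null_total[where p=p and r=r and n=n and \<epsilon>=\<epsilon>, OF p_range eps r1n rn])
        also have "\<dots> \<le> 2 * w" by (rule geom_bound) (use ww w0 in \<open>auto simp: w_def\<close>)
        finally show ?thesis using ww w0 by simp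
      qed
      have P0nn: "0 \<le> graph_prob n (null_q p n) (scan_test p r \<epsilon> n)"
        by (rule graph_prob_nonneg[OF qok_null[OF p_range]])
      define S where "S = {graph_prob n (alt_q p \<rho> n C) (\<lambda>G. \<not> scan_test p r \<epsilon> n G) | C. C \<subseteq> {1..n} \<and> card C = r n}"
      have finS: "finite S" unfolding S_def
        by (rule finite_image_set, rule finite_subset[of _ "Pow {1..n}"]) auto
      have C0: "{1..r n} \<subseteq> {1..n} \<and> card {1..r n} = r n" using rn by auto
      have inS: "graph_prob n (alt_q p \<rho> n {1..r n}) (\<lambda>G. \<not> scan_test p r \<epsilon> n G) \<in> S"
        unfolding S_def using C0 by blast
      hence neS: "S \<noteq> {}" by blast
      have MaxS: "Max S \<le> exp (- (kap \<epsilon> * M))"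
        using elim(3) finS neS by (auto simp: S_def)
      have "0 \<le> graph_prob n (alt_q p \<rho> n {1..r n}) (\<lambda>G. \<not> scan_test p r \<epsilon> n G)"
        by (rule graph_prob_nonneg[OF qok_alt[where p=p and \<rho>=\<rho> and n=n and C="{1..r n}", OF p_range rho_gt rho_le]])
           (use C0 in auto)
      also have "\<dots> \<le> Max S" using finS inS by simp
      finally have Max0: "0 \<le> Max S" .
      have risk: "risk p \<rho> r (scan_test p r \<epsilon>) n = graph_prob n (null_q p n) (scan_test p r \<epsilon> n) + Max S"
        unfolding risk_def S_def by simp
      show ?case unfolding risk dist_real_def using P0 P0nn MaxS Max0 expM by simp
    qed
  qed
qed

end
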